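(* Let $n \ge 8$ with $n\equiv 0\pmod 4$, $s$ an integer with $s^2\equiv 1\pmod n$, $s\not\equiv\pm1\pmod n$, and $G = \langle x,y \mid x^2 = y^{n/2},\ y^n = 1,\ yx = xy^s\rangle$. Let $T_1,\dots,T_{n-3}$ be sequences over $G$ with $|T_i|=2$ for all $i\in[1,n-3]$, let $T = T_1\cdot\ldots\cdot T_{n-3}$, and let $T_0$ be a sequence over $G$ with $|T_0|=4$ such that $\{y^{2w}, y^{2w+n/2}\}\subset\pi(T_0)$ for some integer $w$. Suppose there are integers $a,b$ with $\gcd(a-b,n/2)=1$ such that $y^{2a}\in\pi(T_i)$ for $i\in[1,\frac n2-1]$ and $y^{2b}\in\pi(T_i)$ for $i\in[\frac n2, n-3]$. Then $T\cdot T_0$ has a subsequence $T'$ of length $n$ with $1\in\pi(T')$ and $T_0$ a subsequence of $T'$.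
   Context: A sequence over $G$ is a finite unordered list of elements with repetition; $\cdot$ denotes concatenation. For $S=g_1\cdots g_k$, $\pi(S)$ is the set of all products $g_{\tau(1)}\cdots g_{\tau(k)}$ over all permutations $\tau$ of $[1,k]$. *)

theory Defs
  imports "HOL-Algebra.Algebra" "HOL-Library.Multiset" "HOL-Number_Theory.Cong"
begin

definition list_prod :: "('a, 'b) monoid_scheme \<Rightarrow> 'a list \<Rightarrow> 'a" where
  "list_prod G xs = foldr (\<lambda>g acc. g \<otimes>\<^bsub>G\<^esub> acc) xs \<one>\<^bsub>G\<^esub>"

definition seq_pi :: "('a, 'b) monoid_scheme \<Rightarrow> 'a multiset \<Rightarrow> 'a set" where
  "seq_pi G S = {list_prod G xs | xs. mset xs = S}"

end

theory Submission
  imports Defs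
begin

lemma nt: fixes H c d :: int
  assumes "H \<ge> 4" "even H" "gcd d H = 1"
  shows "\<exists>k. 0 \<le> k \<and> k \<le> H-2 \<and> (H dvd c + k*d \<or> H dvd c + H div 2 + k*d)"
proof -
  obtain u v where uv: "u*d + v*H = 1" using bezout_int[of d H] assms(3) by auto
  have gen: "H dvd e + ((-e*u) mod H)*d" for e
  proof -
    define r where "r = (-e*u) mod H"
    define qq where "qq = (-e*u) div H"
    have r: "r = -e*u - H*qq" unfolding r_def qq_def by (simp add: minus_div_mult_eq_mod[symmetric] algebra_simps)
    have "e + r*d = H*(e*v - qq*d)"
    proof -
      have "e + r*d = e*(u*d + v*H) + r*d" using uv by simp
      also have "\<dots> = H*(e*v - qq*d)" unfolding r by (simp add: algebra_simps)
      finally show ?thesis .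
    qed
    thus ?thesis unfolding r_def by simp
  qed
  define k1 where "k1 = (-c*u) mod H"
  define k2 where "k2 = (-(c + H div 2)*u) mod H"
  have b1: "0 \<le> k1" "k1 \<le> H - 1" using assms(1) unfolding k1_def
    by (simp_all add: pos_mod_bound[THEN less_imp_le] )
  have b2: "0 \<le> k2" "k2 \<le> H - 1" using assms(1) unfolding k2_def
    by (simp_all add: pos_mod_bound[THEN less_imp_le] )
  have d1: "H dvd c + k1*d" using gen[of c] unfolding k1_def .
  have d2: "H dvd c + H div 2 + k2*d" using gen[of "c + H div 2"] unfolding k2_def by simp
  show ?thesis
  proof (cases "k1 = H - 1 \<and> k2 = H - 1")
    case True
    hence "H dvd (c + H div 2 + k1*d) - (c + k1*d)" using d1 d2 by (metis dvd_diff)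
    hence "H dvd H div 2" by simp
    moreover have "0 < H div 2" "H div 2 < H" using assms by auto
    ultimately show ?thesis using zdvd_not_zless by blast
  next
    case False
    show ?thesis
    proof (cases "k1 = H - 1")
      case True
      hence "k2 \<le> H - 2" using False b2 by simp
      thus ?thesis using b2 d2 by blast
    next
      case False
      hence "k1 \<le> H - 2" using b1 by simp
      thus ?thesis using b1 d1 by blast
    qed
  qed
qed
lemma list_prod_closed: "monoid G \<Longrightarrow> set xs \<subseteq> carrier G \<Longrightarrow> list_prod G xs \<in> carrier G"
  by (induction xs) (auto simp: list_prod_def monoid.m_closed)

lemma list_prod_append: "monoid G \<Longrightarrow> set xs \<subseteq> carrier G \<Longrightarrow> set ys \<subseteq> carrier G \<Longrightarrow>
  list_prod G (xs @ ys) = list_prod G xs \<otimes>\<^bsub>G\<^esub> list_prod G ys"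
proof (induction xs)
  case Nil thus ?case by (simp add: list_prod_def monoid.l_one list_prod_closed[unfolded list_prod_def])
next
  case (Cons z xs)
  have "list_prod G ((z#xs) @ ys) = z \<otimes>\<^bsub>G\<^esub> list_prod G (xs @ ys)" by (simp add: list_prod_def)
  also have "\<dots> = z \<otimes>\<^bsub>G\<^esub> (list_prod G xs \<otimes>\<^bsub>G\<^esub> list_prod G ys)" using Cons by simp
  also have "\<dots> = (z \<otimes>\<^bsub>G\<^esub> list_prod G xs) \<otimes>\<^bsub>G\<^esub> list_prod G ys"
    using Cons by (simp add: monoid.m_assoc list_prod_closed)
  finally show ?case by (simp add: list_prod_def)
qed

lemma seq_pi_mult:
  fixes G (structure)
  assumes "group G" "y \<in> carrier G" "y [^]\<^bsub>G\<^esub> (i::int) \<in> seq_pi G A" "y [^]\<^bsub>G\<^esub> (j::int) \<in> seq_pi G B"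
    "set_mset A \<subseteq> carrier G" "set_mset B \<subseteq> carrier G"
  shows "y [^]\<^bsub>G\<^esub> (i + j) \<in> seq_pi G (A + B)"
proof -
  interpret group G by fact
  obtain xs where xs: "mset xs = A" "list_prod G xs = y [^] i" using assms(3) by (auto simp: seq_pi_def)
  obtain ys where ys: "mset ys = B" "list_prod G ys = y [^] j" using assms(4) by (auto simp: seq_pi_def)
  have "set xs \<subseteq> carrier G" "set ys \<subseteq> carrier G" using xs ys assms(5,6) by auto
  hence "list_prod G (xs @ ys) = y [^] (i + j)"
    using list_prod_append[OF monoid_axioms] xs ys by (simp add: int_pow_mult assms(2))
  moreover have "mset (xs @ ys) = A + B" using xs ys by simp
  ultimately show ?thesis unfolding seq_pi_def by (metis (mono_tags, lifting) mem_Collect_eq)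
qed

lemma seq_pi_sum:
  assumes "group G" "y \<in> carrier G" "finite I"
    "\<And>i. i \<in> I \<Longrightarrow> set_mset (T i) \<subseteq> carrier G"
    "\<And>i. i \<in> I \<Longrightarrow> y [^]\<^bsub>G\<^esub> (c i :: int) \<in> seq_pi G (T i)"
  shows "y [^]\<^bsub>G\<^esub> (\<Sum>i\<in>I. c i) \<in> seq_pi G (\<Sum>i\<in>I. T i) \<and> set_mset (\<Sum>i\<in>I. T i) \<subseteq> carrier G"
  using assms(3,4,5)
proof (induction I rule: finite_induct)
  case empty
  have "list_prod G [] = \<one>\<^bsub>G\<^esub>" by (simp add: list_prod_def)
  hence "\<one>\<^bsub>G\<^esub> \<in> seq_pi G {#}" unfolding seq_pi_def by force
  thus ?case by simp
next
  case (insert j I)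
  hence IH: "y [^]\<^bsub>G\<^esub> (\<Sum>i\<in>I. c i) \<in> seq_pi G (\<Sum>i\<in>I. T i)" "set_mset (\<Sum>i\<in>I. T i) \<subseteq> carrier G"
    by auto
  have "y [^]\<^bsub>G\<^esub> (c j + (\<Sum>i\<in>I. c i)) \<in> seq_pi G (T j + (\<Sum>i\<in>I. T i))"
    by (rule seq_pi_mult[OF assms(1,2)]) (use insert IH in auto)
  thus ?case using insert IH by auto
qed

lemma pow_dvd_one: fixes G (structure) assumes "group G" "y \<in> carrier G" "y [^]\<^bsub>G\<^esub> (n::nat) = \<one>\<^bsub>G\<^esub>" "int n dvd e"
  shows "y [^]\<^bsub>G\<^esub> (e::int) = \<one>\<^bsub>G\<^esub>"
proof -
  interpret group G by fact
  obtain t where "e = int n * t" using assms(4) by blast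
  hence "y [^] e = (y [^] int n) [^] t" using int_pow_pow[OF assms(2)] by simp
  thus ?thesis using assms(3) by (simp add: int_pow_int)
qed

theorem lemma4p1:
  fixes G (structure) and x y :: 'a and n :: nat and s w a b :: int
    and T :: "nat \<Rightarrow> 'a multiset" and T0 :: "'a multiset"
  assumes grp: "group G"
    and n_ge: "n \<ge> 8" and n_mod: "4 dvd n"
    and s_sq: "[s^2 = 1] (mod int n)"
    and s_not1: "\<not> [s = 1] (mod int n)" and s_notm1: "\<not> [s = -1] (mod int n)"
    and xy: "x \<in> carrier G" "y \<in> carrier G"
    and gen: "generate G {x, y} = carrier G"
    and rel1: "x [^] (2::nat) = y [^] (n div 2)"
    and rel2: "y [^] n = \<one>"
    and rel3: "y \<otimes> x = x \<otimes> y [^] s"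
    and ord: "order G = 2 * n"
    and T_carr: "\<And>i. i \<in> {1..n-3} \<Longrightarrow> set_mset (T i) \<subseteq> carrier G"
    and T_size: "\<And>i. i \<in> {1..n-3} \<Longrightarrow> size (T i) = 2"
    and T0_carr: "set_mset T0 \<subseteq> carrier G"
    and T0_size: "size T0 = 4"
    and T0_pi: "{y [^] (2*w), y [^] (2*w + int n div 2)} \<subseteq> seq_pi G T0"
    and ab_gcd: "gcd (a - b) (int n div 2) = 1"
    and Ta: "\<And>i. i \<in> {1..n div 2 - 1} \<Longrightarrow> y [^] (2*a) \<in> seq_pi G (T i)"
    and Tb: "\<And>i. i \<in> {n div 2..n-3} \<Longrightarrow> y [^] (2*b) \<in> seq_pi G (T i)"
  shows "\<exists>T'. T' \<subseteq># (\<Sum>i\<in>{1..n-3}. T i) + T0 \<and> size T' = n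
              \<and> \<one> \<in> seq_pi G T' \<and> T0 \<subseteq># T'"
proof -
  define h where "h = n div 2"
  define H where "H = int n div 2"
  define m where "m = h - 2"
  have hH: "H = int h" unfolding H_def h_def by simp
  have n2h: "int n = 2 * H" using n_mod unfolding H_def by auto
  have evH: "even H" using n_mod unfolding H_def by auto
  have H4: "H \<ge> 4" using n_ge unfolding H_def by simp
  have h4: "h \<ge> 4" using n_ge unfolding h_def by simp
  have mdef: "n - 3 = h + m - 1" unfolding m_def h_def using n_mod n_ge by auto
  obtain k where k: "0 \<le> k" "k \<le> H - 2"
    and kd: "H dvd (w + int m * b) + k*(a-b) \<or> H dvd (w + int m * b) + H div 2 + k*(a-b)"
    using nt[OF H4 evH, of "a-b" "w + int m * b"] ab_gcd unfolding H_def by auto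
  define kk where "kk = nat k"
  have kk: "kk \<le> m" "int kk = k" using k unfolding kk_def m_def hH by auto
  define A where "A = {1..kk}"
  define B where "B = {h..<h + (m - kk)}"
  define I where "I = A \<union> B"
  define c where "c i = (if i < h then 2*a else 2*b)" for i
  have AB: "A \<inter> B = {}" using kk unfolding A_def B_def m_def by auto
  have fin: "finite A" "finite B" "finite I" unfolding A_def B_def I_def by auto
  have A_sub: "A \<subseteq> {1..h - 1}" using kk unfolding A_def m_def by auto
  have B_sub: "B \<subseteq> {h..n-3}" using kk mdef unfolding B_def by auto
  have I_sub: "I \<subseteq> {1..n-3}"
  proof
    fix i assume "i \<in> I"
    hence "i \<in> A \<union> B" unfolding I_def .
    thus "i \<in> {1..n-3}"
    proof
      assume "i \<in> A" thus ?thesis using A_sub h4 mdef by fastforce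
    next
      assume "i \<in> B" thus ?thesis using B_sub h4 by auto
    qed
  qed
  have cardI: "card I = m" unfolding I_def using card_Un_disjoint[OF fin(1,2) AB] kk
    unfolding A_def B_def by simp
  have sumc: "(\<Sum>i\<in>I. c i) = 2*a*k + 2*b*(int m - k)"
  proof -
    have "(\<Sum>i\<in>A. c i) = (\<Sum>i\<in>A. 2*a)" using A_sub h4 unfolding c_def
      by (intro sum.cong) auto
    moreover have "(\<Sum>i\<in>B. c i) = (\<Sum>i\<in>B. 2*b)" unfolding c_def B_def by (intro sum.cong) auto
    ultimately show ?thesis unfolding I_def using sum.union_disjoint[OF fin(1,2) AB, of c] kk
      unfolding A_def B_def by (simp add: of_nat_diff)
  qed
  have Icarr: "\<And>i. i \<in> I \<Longrightarrow> set_mset (T i) \<subseteq> carrier G" using T_carr I_sub by blast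
  have Ipi: "\<And>i. i \<in> I \<Longrightarrow> y [^] (c i) \<in> seq_pi G (T i)"
  proof -
    fix i assume "i \<in> I"
    hence "i \<in> A \<union> B" unfolding I_def .
    thus "y [^] (c i) \<in> seq_pi G (T i)"
    proof
      assume "i \<in> A" thus ?thesis using A_sub Ta h4 unfolding c_def h_def by auto
    next
      assume "i \<in> B" thus ?thesis using B_sub Tb unfolding c_def h_def by auto
    qed
  qed
  have S: "y [^] (\<Sum>i\<in>I. c i) \<in> seq_pi G (\<Sum>i\<in>I. T i)" "set_mset (\<Sum>i\<in>I. T i) \<subseteq> carrier G"
    using seq_pi_sum[OF grp xy(2) fin(3) Icarr Ipi] by auto
  define T' where "T' = T0 + (\<Sum>i\<in>I. T i)"
  have one: "\<one> \<in> seq_pi G T'"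
  proof (cases "H dvd (w + int m * b) + k*(a-b)")
    case True
    have "y [^] (2*w + (\<Sum>i\<in>I. c i)) \<in> seq_pi G T'"
      unfolding T'_def by (rule seq_pi_mult[OF grp xy(2)]) (use T0_pi S T0_carr in auto)
    moreover have "int n dvd 2*w + (\<Sum>i\<in>I. c i)"
    proof -
      obtain t where "(w + int m * b) + k*(a-b) = H * t" using True by blast
      hence "2*w + (\<Sum>i\<in>I. c i) = int n * t" unfolding sumc n2h by (simp add: algebra_simps)
      thus ?thesis by simp
    qed
    ultimately show ?thesis using pow_dvd_one[OF grp xy(2) rel2] by metis
  next
    case False
    hence D: "H dvd (w + int m * b) + H div 2 + k*(a-b)" using kd by auto
    have "y [^] ((2*w + int n div 2) + (\<Sum>i\<in>I. c i)) \<in> seq_pi G T'"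
      unfolding T'_def by (rule seq_pi_mult[OF grp xy(2)]) (use T0_pi S T0_carr in auto)
    moreover have "int n dvd (2*w + int n div 2) + (\<Sum>i\<in>I. c i)"
    proof -
      obtain t where t: "(w + int m * b) + H div 2 + k*(a-b) = H * t" using D by blast
      have HH: "H = 2 * (H div 2)" using evH by simp
      have "(2*w + int n div 2) + (\<Sum>i\<in>I. c i) = 2 * ((w + int m * b) + H div 2 + k*(a-b))"
        unfolding sumc H_def[symmetric] by (subst (1) HH) (simp add: algebra_simps)
      also have "\<dots> = int n * t" using t n2h by simp
      finally show ?thesis by simp
    qed
    ultimately show ?thesis using pow_dvd_one[OF grp xy(2) rel2] by metis
  qed
  have sub: "T' \<subseteq># (\<Sum>i\<in>{1..n-3}. T i) + T0"
  proof -
    have "(\<Sum>i\<in>{1..n-3}. T i) = (\<Sum>i\<in>{1..n-3} - I. T i) + (\<Sum>i\<in>I. T i)"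
      using sum.subset_diff[OF I_sub] by simp
    thus ?thesis unfolding T'_def by (simp add: add.commute add.left_commute)
  qed
  have sz: "size T' = n"
  proof -
    have "size T' = 4 + (\<Sum>i\<in>I. size (T i))" unfolding T'_def using T0_size by simp
    also have "(\<Sum>i\<in>I. size (T i)) = (\<Sum>i\<in>I. 2)" using T_size I_sub by (intro sum.cong) auto
    also have "\<dots> = 2 * m" using cardI by simp
    finally show ?thesis unfolding m_def h_def using n_mod n_ge by auto
  qed
  have "T0 \<subseteq># T'" unfolding T'_def by simp
  thus ?thesis using sub sz one by blast
qed

end
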